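(* Let $(H,B_1,B_2)$ be a Rota-Baxter system of Hopf algebras, $G(H)$ the group of group-like elements of $H$ and $P(H)$ the Lie algebra of primitive elements of $H$. Then $B_1,B_2$ map $G(H)$ into $G(H)$ and $P(H)$ into $P(H)$, $(G(H),B_1|_{G(H)},S\circ B_2|_{G(H)})$ is a Rota-Baxter system of groups, and $(P(H),B_1|_{P(H)},-B_2|_{P(H)})$ is a Rota-Baxter system of Lie algebras.
   Context: $\mathbb{F}$ is a field of characteristic $0$; Sweedler notation $\Delta(a)=a_1\otimes a_2$. A Rota-Baxter system of Hopf algebras is a triple $(H,B_1,B_2)$ where $(H,\cdot,1,\Delta,\epsilon,S)$ is a cocommutative Hopf algebra and $B_1,B_2:H\to H$ are coalgebra homomorphisms with $B_1(1)=B_2(1)=1$ such that for all $a,b\in H$: $B_1(a)B_1(b)=B_1(B_1(a_1)bS(B_2(a_2)))$ and $B_2(a)B_2(b)=B_2(B_1(a_1)bS(B_2(a_2)))$. A Rota-Baxter system of groups is a group $G$ with maps $R_1,R_2:G\to G$ such that $R_1(a)R_1(b)=R_1(R_1(a)bR_2(a))$ and $R_2(b)R_2(a)=R_2(R_1(a)bR_2(a))$ for all $a,b\in G$. A Rota-Baxter system of Lie algebras is a Lie algebra $\mathfrak{g}$ with linear maps $R_1,R_2$ such that $[R_1(a),R_1(b)]=R_1([R_1(a),R_1(b)]-[R_2(a),R_2(b)])$ and $[R_2(b),R_2(a)]=R_2([R_1(a),R_1(b)]-[R_2(a),R_2(b)])$ for all $a,b\in\mathfrak{g}$. The bracket on $P(H)$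 is the commutator $[a,b]=ab-ba$. *)

theory Defs
  imports "HOL-Algebra.Group" "HOL-Library.Function_Algebras" "HOL.Vector_Spaces"
begin

text \<open>Elements of the free vector
space on H x H (resp. H x H x H) are finitely supported functions to 'k. The tensor
product H (x) H is the quotient of this free space by the subspace spanned by the
bilinearity relations; we work with representatives and the equivalence teq2 / teq3.\<close>

definition delta :: "'a \<Rightarrow> 'a \<Rightarrow> 'k::zero_neq_one" where
  "delta p = (\<lambda>q. if q = p then 1 else 0)"

definition fscale :: "'k::times \<Rightarrow> ('a \<Rightarrow> 'k) \<Rightarrow> ('a \<Rightarrow> 'k)" where
  "fscale c g = (\<lambda>x. c * g x)"

definition fin_supp :: "('a \<Rightarrow> 'k::zero) \<Rightarrow> bool" where
  "fin_supp t \<longleftrightarrow> finite {p. t p \<noteq> 0}"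

definition lin_ext :: "('k \<Rightarrow> 'b \<Rightarrow> 'b) \<Rightarrow> ('a \<Rightarrow> 'k::zero) \<Rightarrow> ('a \<Rightarrow> 'b) \<Rightarrow> 'b::comm_monoid_add" where
  "lin_ext sc t f = (\<Sum>p | t p \<noteq> 0. sc (t p) (f p))"

definition rel2 :: "('k::field \<Rightarrow> 'h::plus \<Rightarrow> 'h) \<Rightarrow> ('h \<times> 'h \<Rightarrow> 'k) set" where
  "rel2 smul =
     {delta (x + x', y) - delta (x, y) - delta (x', y) | x x' y. True}
   \<union> {delta (x, y + y') - delta (x, y) - delta (x, y') | x y y'. True}
   \<union> {delta (smul c x, y) - fscale c (delta (x, y)) | c x y. True}
   \<union> {delta (x, smul c y) - fscale c (delta (x, y)) | c x y. True}"

definition rel3 :: "('k::field \<Rightarrow> 'h::plus \<Rightarrow> 'h) \<Rightarrow> ('h \<times> 'h \<times> 'h \<Rightarrow> 'k) set" where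
  "rel3 smul =
     {delta (x + x', y, z) - delta (x, y, z) - delta (x', y, z) | x x' y z. True}
   \<union> {delta (x, y + y', z) - delta (x, y, z) - delta (x, y', z) | x y y' z. True}
   \<union> {delta (x, y, z + z') - delta (x, y, z) - delta (x, y, z') | x y z z'. True}
   \<union> {delta (smul c x, y, z) - fscale c (delta (x, y, z)) | c x y z. True}
   \<union> {delta (x, smul c y, z) - fscale c (delta (x, y, z)) | c x y z. True}
   \<union> {delta (x, y, smul c z) - fscale c (delta (x, y, z)) | c x y z. True}"

definition teq2 :: "('k::field \<Rightarrow> 'h::plus \<Rightarrow> 'h) \<Rightarrow> ('h \<times> 'h \<Rightarrow> 'k) \<Rightarrow> ('h \<times> 'h \<Rightarrow> 'k) \<Rightarrow> bool" where
  "teq2 smul t u \<longleftrightarrow> t - u \<in> module.span fscale (rel2 smul)"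

definition teq3 :: "('k::field \<Rightarrow> 'h::plus \<Rightarrow> 'h) \<Rightarrow> ('h \<times> 'h \<times> 'h \<Rightarrow> 'k) \<Rightarrow> ('h \<times> 'h \<times> 'h \<Rightarrow> 'k) \<Rightarrow> bool" where
  "teq3 smul t u \<longleftrightarrow> t - u \<in> module.span fscale (rel3 smul)"

definition tmul2 :: "('h \<times> 'h \<Rightarrow> 'k) \<Rightarrow> ('h \<times> 'h \<Rightarrow> 'k) \<Rightarrow> ('h::times \<times> 'h \<Rightarrow> 'k::field)" where
  "tmul2 t s = lin_ext fscale t (\<lambda>p. lin_ext fscale s (\<lambda>q. delta (fst p * fst q, snd p * snd q)))"

definition f_algebra :: "('k::field \<Rightarrow> 'h::ring_1 \<Rightarrow> 'h) \<Rightarrow> bool" where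
  "f_algebra smul \<longleftrightarrow> vector_space smul \<and>
     (\<forall>c x y. smul c (x * y) = smul c x * y \<and> smul c (x * y) = x * smul c y)"

definition lin_map :: "('k::field \<Rightarrow> 'h::ring_1 \<Rightarrow> 'h) \<Rightarrow> ('h \<Rightarrow> 'h) \<Rightarrow> bool" where
  "lin_map smul f \<longleftrightarrow> (\<forall>c x y. f (smul c x + y) = smul c (f x) + f y)"

definition cocomm_hopf ::
  "('k::field \<Rightarrow> 'h::ring_1 \<Rightarrow> 'h) \<Rightarrow> ('h \<Rightarrow> ('h \<times> 'h \<Rightarrow> 'k)) \<Rightarrow> ('h \<Rightarrow> 'k) \<Rightarrow> ('h \<Rightarrow> 'h) \<Rightarrow> bool" where
  "cocomm_hopf smul \<Delta> \<epsilon> S \<longleftrightarrow>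
     f_algebra smul
     \<comment> \<open>comultiplication: a linear map H \<rightarrow> H (x) H\<close>
     \<and> (\<forall>x. fin_supp (\<Delta> x))
     \<and> (\<forall>c x y. teq2 smul (\<Delta> (smul c x + y)) (fscale c (\<Delta> x) + \<Delta> y))
     \<comment> \<open>counit: a linear map H \<rightarrow> F\<close>
     \<and> (\<forall>c x y. \<epsilon> (smul c x + y) = c * \<epsilon> x + \<epsilon> y)
     \<comment> \<open>coassociativity\<close>
     \<and> (\<forall>a. teq3 smul
            (lin_ext fscale (\<Delta> a) (\<lambda>p. lin_ext fscale (\<Delta> (fst p)) (\<lambda>q. delta (fst q, snd q, snd p))))
            (lin_ext fscale (\<Delta> a) (\<lambda>p. lin_ext fscale (\<Delta> (snd p)) (\<lambda>q. delta (fst p, fst q, snd q)))))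
     \<comment> \<open>counit axioms\<close>
     \<and> (\<forall>a. lin_ext smul (\<Delta> a) (\<lambda>p. smul (\<epsilon> (fst p)) (snd p)) = a)
     \<and> (\<forall>a. lin_ext smul (\<Delta> a) (\<lambda>p. smul (\<epsilon> (snd p)) (fst p)) = a)
     \<comment> \<open>bialgebra: \<Delta> and \<epsilon> are algebra homomorphisms\<close>
     \<and> (\<forall>x y. teq2 smul (\<Delta> (x * y)) (tmul2 (\<Delta> x) (\<Delta> y)))
     \<and> teq2 smul (\<Delta> 1) (delta (1, 1))
     \<and> (\<forall>x y. \<epsilon> (x * y) = \<epsilon> x * \<epsilon> y) \<and> \<epsilon> 1 = 1
     \<comment> \<open>antipode: a linear map with S(a_1) a_2 = \<epsilon>(a) 1 = a_1 S(a_2)\<close>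
     \<and> lin_map smul S
     \<and> (\<forall>a. lin_ext smul (\<Delta> a) (\<lambda>p. S (fst p) * snd p) = smul (\<epsilon> a) 1)
     \<and> (\<forall>a. lin_ext smul (\<Delta> a) (\<lambda>p. fst p * S (snd p)) = smul (\<epsilon> a) 1)
     \<comment> \<open>cocommutativity\<close>
     \<and> (\<forall>a. teq2 smul (\<Delta> a) (\<lambda>(x, y). \<Delta> a (y, x)))"

definition coalg_hom ::
  "('k::field \<Rightarrow> 'h::ring_1 \<Rightarrow> 'h) \<Rightarrow> ('h \<Rightarrow> ('h \<times> 'h \<Rightarrow> 'k)) \<Rightarrow> ('h \<Rightarrow> 'k) \<Rightarrow> ('h \<Rightarrow> 'h) \<Rightarrow> bool" where
  "coalg_hom smul \<Delta> \<epsilon> B \<longleftrightarrow> lin_map smul B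
     \<and> (\<forall>a. teq2 smul (\<Delta> (B a)) (lin_ext fscale (\<Delta> a) (\<lambda>p. delta (B (fst p), B (snd p)))))
     \<and> (\<forall>a. \<epsilon> (B a) = \<epsilon> a)"

definition rbs_hopf ::
  "('k::field \<Rightarrow> 'h::ring_1 \<Rightarrow> 'h) \<Rightarrow> ('h \<Rightarrow> ('h \<times> 'h \<Rightarrow> 'k)) \<Rightarrow> ('h \<Rightarrow> 'k) \<Rightarrow> ('h \<Rightarrow> 'h)
    \<Rightarrow> ('h \<Rightarrow> 'h) \<Rightarrow> ('h \<Rightarrow> 'h) \<Rightarrow> bool" where
  "rbs_hopf smul \<Delta> \<epsilon> S B1 B2 \<longleftrightarrow>
     cocomm_hopf smul \<Delta> \<epsilon> S
     \<and> coalg_hom smul \<Delta> \<epsilon> B1 \<and> coalg_hom smul \<Delta> \<epsilon> B2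
     \<and> B1 1 = 1 \<and> B2 1 = 1
     \<and> (\<forall>a b. B1 a * B1 b = B1 (lin_ext smul (\<Delta> a) (\<lambda>p. B1 (fst p) * b * S (B2 (snd p)))))
     \<and> (\<forall>a b. B2 a * B2 b = B2 (lin_ext smul (\<Delta> a) (\<lambda>p. B1 (fst p) * b * S (B2 (snd p)))))"

definition grouplike ::
  "('k::field \<Rightarrow> 'h::ring_1 \<Rightarrow> 'h) \<Rightarrow> ('h \<Rightarrow> ('h \<times> 'h \<Rightarrow> 'k)) \<Rightarrow> 'h set" where
  "grouplike smul \<Delta> = {g. g \<noteq> 0 \<and> teq2 smul (\<Delta> g) (delta (g, g))}"

definition primitive ::
  "('k::field \<Rightarrow> 'h::ring_1 \<Rightarrow> 'h) \<Rightarrow> ('h \<Rightarrow> ('h \<times> 'h \<Rightarrow> 'k)) \<Rightarrow> 'h set" where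
  "primitive smul \<Delta> = {x. teq2 smul (\<Delta> x) (delta (x, 1) + delta (1, x))}"

definition grouplike_group ::
  "('k::field \<Rightarrow> 'h::ring_1 \<Rightarrow> 'h) \<Rightarrow> ('h \<Rightarrow> ('h \<times> 'h \<Rightarrow> 'k)) \<Rightarrow> 'h monoid" where
  "grouplike_group smul \<Delta> = \<lparr>carrier = grouplike smul \<Delta>, mult = (*), one = 1\<rparr>"

definition rbs_group :: "('a, 'b) monoid_scheme \<Rightarrow> ('a \<Rightarrow> 'a) \<Rightarrow> ('a \<Rightarrow> 'a) \<Rightarrow> bool" where
  "rbs_group G R1 R2 \<longleftrightarrow> group G
     \<and> (\<forall>a\<in>carrier G. R1 a \<in> carrier G \<and> R2 a \<in> carrier G)
     \<and> (\<forall>a\<in>carrier G. \<forall>b\<in>carrier G.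
          R1 a \<otimes>\<^bsub>G\<^esub> R1 b = R1 (R1 a \<otimes>\<^bsub>G\<^esub> b \<otimes>\<^bsub>G\<^esub> R2 a)
        \<and> R2 b \<otimes>\<^bsub>G\<^esub> R2 a = R2 (R1 a \<otimes>\<^bsub>G\<^esub> b \<otimes>\<^bsub>G\<^esub> R2 a))"

definition lie_algebra :: "('k::field \<Rightarrow> 'v::ab_group_add \<Rightarrow> 'v) \<Rightarrow> 'v set \<Rightarrow> ('v \<Rightarrow> 'v \<Rightarrow> 'v) \<Rightarrow> bool" where
  "lie_algebra smul V br \<longleftrightarrow> vector_space smul \<and> module.subspace smul V
     \<and> (\<forall>x\<in>V. \<forall>y\<in>V. br x y \<in> V)
     \<and> (\<forall>c. \<forall>x\<in>V. \<forall>y\<in>V. \<forall>z\<in>V. br (smul c x + y) z = smul c (br x z) + br y z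
                             \<and> br z (smul c x + y) = smul c (br z x) + br z y)
     \<and> (\<forall>x\<in>V. br x x = 0)
     \<and> (\<forall>x\<in>V. \<forall>y\<in>V. \<forall>z\<in>V. br x (br y z) + br y (br z x) + br z (br x y) = 0)"

definition rbs_lie :: "('k::field \<Rightarrow> 'v::ab_group_add \<Rightarrow> 'v) \<Rightarrow> 'v set \<Rightarrow> ('v \<Rightarrow> 'v \<Rightarrow> 'v)
    \<Rightarrow> ('v \<Rightarrow> 'v) \<Rightarrow> ('v \<Rightarrow> 'v) \<Rightarrow> bool" where
  "rbs_lie smul V br R1 R2 \<longleftrightarrow> lie_algebra smul V br
     \<and> (\<forall>a\<in>V. R1 a \<in> V \<and> R2 a \<in> V)
     \<and> (\<forall>c. \<forall>x\<in>V. \<forall>y\<in>V. R1 (smul c x + y) = smul c (R1 x) + R1 y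
                      \<and> R2 (smul c x + y) = smul c (R2 x) + R2 y)
     \<and> (\<forall>a\<in>V. \<forall>b\<in>V.
          br (R1 a) (R1 b) = R1 (br (R1 a) (R1 b) - br (R2 a) (R2 b))
        \<and> br (R2 b) (R2 a) = R2 (br (R1 a) (R1 b) - br (R2 a) (R2 b)))"

end

theory Submission
  imports Defs
begin

lemma sum_fun_app: "(sum f A) q = sum (\<lambda>p. f p q) A"
  by (induct A rule: infinite_finite_induct) auto

lemma module_fscale: "module (fscale :: 'k::field \<Rightarrow> ('a \<Rightarrow> 'k) \<Rightarrow> _)"
  by unfold_locales (auto simp: fscale_def fun_eq_iff algebra_simps)

lemma fin_supp_delta[simp]: "fin_supp (delta p :: _ \<Rightarrow> 'k::zero_neq_one)"
proof -
  have "{q. delta p q \<noteq> (0::'k)} \<subseteq> {p}" by (auto simp: delta_def)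
  then show ?thesis unfolding fin_supp_def using finite_subset by blast
qed

lemma fin_supp_add[simp]: "fin_supp t \<Longrightarrow> fin_supp u \<Longrightarrow> fin_supp (t + (u :: _ \<Rightarrow> 'k::ab_group_add))"
  unfolding fin_supp_def by (rule finite_subset[of _ "{p. t p \<noteq> 0} \<union> {p. u p \<noteq> 0}"]) auto

lemma fin_supp_diff[simp]: "fin_supp t \<Longrightarrow> fin_supp u \<Longrightarrow> fin_supp (t - (u :: _ \<Rightarrow> 'k::ab_group_add))"
  unfolding fin_supp_def by (rule finite_subset[of _ "{p. t p \<noteq> 0} \<union> {p. u p \<noteq> 0}"]) auto

lemma fin_supp_fscale[simp]: "fin_supp t \<Longrightarrow> fin_supp (fscale c (t :: _ \<Rightarrow> 'k::field))"
  unfolding fin_supp_def fscale_def by (rule finite_subset[of _ "{p. t p \<noteq> 0}"]) auto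

lemma fin_supp_zero[simp]: "fin_supp (0 :: _ \<Rightarrow> 'k::ab_group_add)"
  unfolding fin_supp_def by simp

lemma fin_supp_sum: "(\<And>p. p \<in> A \<Longrightarrow> fin_supp (f p)) \<Longrightarrow> fin_supp (sum f A :: _ \<Rightarrow> 'k::ab_group_add)"
  by (induct A rule: infinite_finite_induct) auto

lemma lin_ext_sup:
  assumes m: "module sc" and "finite A" "{p. t p \<noteq> 0} \<subseteq> A"
  shows "lin_ext sc t f = (\<Sum>p\<in>A. sc (t p) (f p))"
  unfolding lin_ext_def
  by (rule sum.mono_neutral_left) (use assms module.scale_zero_left[OF m] in auto)

lemma lin_ext_add:
  assumes m: "module sc" and t: "fin_supp t" and u: "fin_supp u"
  shows "lin_ext sc (t + u) f = lin_ext sc t f + lin_ext sc u f"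
proof -
  let ?A = "{p. t p \<noteq> 0} \<union> {p. u p \<noteq> 0}"
  have fA: "finite ?A" using t u by (auto simp: fin_supp_def)
  have "lin_ext sc (t + u) f = (\<Sum>p\<in>?A. sc ((t + u) p) (f p))"
    by (rule lin_ext_sup[OF m fA]) auto
  also have "\<dots> = (\<Sum>p\<in>?A. sc (t p) (f p)) + (\<Sum>p\<in>?A. sc (u p) (f p))"
    by (simp add: module.scale_left_distrib[OF m] sum.distrib)
  also have "\<dots> = lin_ext sc t f + lin_ext sc u f"
    using lin_ext_sup[OF m fA, of t f] lin_ext_sup[OF m fA, of u f] by auto
  finally show ?thesis .
qed

lemma lin_ext_diff:
  assumes m: "module sc" and t: "fin_supp t" and u: "fin_supp u"
  shows "lin_ext sc (t - u) f = lin_ext sc t f - lin_ext sc u f"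
proof -
  let ?A = "{p. t p \<noteq> 0} \<union> {p. u p \<noteq> 0}"
  have fA: "finite ?A" using t u by (auto simp: fin_supp_def)
  have "lin_ext sc (t - u) f = (\<Sum>p\<in>?A. sc ((t - u) p) (f p))"
    by (rule lin_ext_sup[OF m fA]) auto
  also have "\<dots> = (\<Sum>p\<in>?A. sc (t p) (f p)) - (\<Sum>p\<in>?A. sc (u p) (f p))"
    by (simp add: module.scale_left_diff_distrib[OF m] sum_subtractf)
  also have "\<dots> = lin_ext sc t f - lin_ext sc u f"
    using lin_ext_sup[OF m fA, of t f] lin_ext_sup[OF m fA, of u f] by auto
  finally show ?thesis .
qed

lemma lin_ext_scale:
  assumes m: "module sc" and t: "fin_supp t"
  shows "lin_ext sc (fscale c t) f = sc c (lin_ext sc t f)"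
proof -
  let ?A = "{p. t p \<noteq> 0}"
  have fA: "finite ?A" using t by (auto simp: fin_supp_def)
  have "lin_ext sc (fscale c t) f = (\<Sum>p\<in>?A. sc (fscale c t p) (f p))"
    by (rule lin_ext_sup[OF m fA]) (auto simp: fscale_def)
  also have "\<dots> = sc c (\<Sum>p\<in>?A. sc (t p) (f p))"
    by (simp add: module.scale_sum_right[OF m] fscale_def module.scale_scale[OF m])
  also have "\<dots> = sc c (lin_ext sc t f)"
    using lin_ext_sup[OF m fA, of t f] by auto
  finally show ?thesis .
qed

lemma lin_ext_zero: "lin_ext sc 0 f = 0"
  unfolding lin_ext_def by simp

lemma lin_ext_delta:
  assumes m: "module sc" shows "lin_ext sc (delta p) f = f p"
proof -
  have "lin_ext sc (delta p) f = (\<Sum>q\<in>{p}. sc (delta p q) (f q))"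
    by (rule lin_ext_sup[OF m]) (auto simp: delta_def)
  then show ?thesis by (simp add: delta_def module.scale_one[OF m])
qed

lemma lin_ext_fun_add:
  assumes m: "module sc"
  shows "lin_ext sc t (\<lambda>p. f p + g p) = lin_ext sc t f + lin_ext sc t g"
  unfolding lin_ext_def by (simp add: module.scale_right_distrib[OF m] sum.distrib)

lemma lin_ext_fun_diff:
  assumes m: "module sc"
  shows "lin_ext sc t (\<lambda>p. f p - g p) = lin_ext sc t f - lin_ext sc t g"
  unfolding lin_ext_def by (simp add: module.scale_right_diff_distrib[OF m] sum_subtractf)

lemma lin_ext_in_subspace:
  assumes m: "module sc" and N: "module.subspace sc N" and f: "\<And>p. f p \<in> N"
  shows "lin_ext sc t f \<in> N"
  unfolding lin_ext_def
  by (rule module.subspace_sum[OF m N]) (rule module.subspace_scale[OF m N f])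

lemma fin_supp_lin_ext:
  assumes "\<And>p. fin_supp (\<phi> p)"
  shows "fin_supp (lin_ext fscale t \<phi> :: _ \<Rightarrow> 'k::field)"
  unfolding lin_ext_def by (rule fin_supp_sum) (simp add: assms)

lemma lin_ext_comp:
  assumes m: "module sc" and t: "fin_supp (t :: _ \<Rightarrow> 'k::field)" and ph: "\<And>p. fin_supp (\<phi> p :: _ \<Rightarrow> 'k)"
  shows "lin_ext sc (lin_ext fscale t \<phi>) g = lin_ext sc t (\<lambda>p. lin_ext sc (\<phi> p) g)"
proof -
  have fA: "finite {p. t p \<noteq> 0}" using t by (simp add: fin_supp_def)
  have "lin_ext sc (\<Sum>p\<in>B. fscale (t p) (\<phi> p)) g = (\<Sum>p\<in>B. sc (t p) (lin_ext sc (\<phi> p) g))"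
    if "finite B" for B
    using that
  proof (induct B rule: finite_induct)
    case empty then show ?case by (simp add: lin_ext_def)
  next
    case (insert x F)
    have "lin_ext sc (fscale (t x) (\<phi> x) + (\<Sum>p\<in>F. fscale (t p) (\<phi> p))) g
        = lin_ext sc (fscale (t x) (\<phi> x)) g + lin_ext sc (\<Sum>p\<in>F. fscale (t p) (\<phi> p)) g"
      by (rule lin_ext_add[OF m]) (auto intro!: fin_supp_sum simp: ph)
    then show ?case using insert by (simp only: sum.insert[OF insert(1,2)] lin_ext_scale[OF m ph])
  qed
  from this[OF fA] show ?thesis unfolding lin_ext_def[of fscale] by (simp add: lin_ext_def[of sc t])
qed

lemma rel2_lin_ext:
  fixes smul :: "'k::field \<Rightarrow> 'h::plus \<Rightarrow> 'h" and sc :: "'k \<Rightarrow> 'b::ab_group_add \<Rightarrow> 'b"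
  assumes m: "module sc" and N: "module.subspace sc N"
  and r1: "\<And>x x' y. g (x + x', y) - g (x, y) - g (x', y) \<in> N"
  and r2: "\<And>x y y'. g (x, y + y') - g (x, y) - g (x, y') \<in> N"
  and r3: "\<And>c x y. g (smul c x, y) - sc c (g (x, y)) \<in> N"
  and r4: "\<And>c x y. g (x, smul c y) - sc c (g (x, y)) \<in> N"
  and r: "r \<in> rel2 smul"
  shows "fin_supp r \<and> lin_ext sc r g \<in> N"
  using r unfolding rel2_def
  by (auto simp: lin_ext_diff[OF m] lin_ext_delta[OF m] lin_ext_scale[OF m] intro: r1 r2 r3 r4)

lemma span_lin_ext:
  fixes smul :: "'k::field \<Rightarrow> 'h::plus \<Rightarrow> 'h" and sc :: "'k \<Rightarrow> 'b::ab_group_add \<Rightarrow> 'b"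
  assumes m: "module sc" and N: "module.subspace sc N"
  and r1: "\<And>x x' y. g (x + x', y) - g (x, y) - g (x', y) \<in> N"
  and r2: "\<And>x y y'. g (x, y + y') - g (x, y) - g (x, y') \<in> N"
  and r3: "\<And>c x y. g (smul c x, y) - sc c (g (x, y)) \<in> N"
  and r4: "\<And>c x y. g (x, smul c y) - sc c (g (x, y)) \<in> N"
  and t: "t \<in> module.span fscale (rel2 smul)"
  shows "fin_supp t \<and> lin_ext sc t g \<in> N"
proof (rule module.span_induct_alt[OF module_fscale t, where h = "\<lambda>t. fin_supp t \<and> lin_ext sc t g \<in> N"])
  show "fin_supp 0 \<and> lin_ext sc 0 g \<in> N"
    by (simp add: lin_ext_zero module.subspace_0[OF m N] fin_supp_def)
next
  fix c x y
  assume x: "x \<in> rel2 smul" and y: "fin_supp y \<and> lin_ext sc y g \<in> N"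
  have xx: "fin_supp x \<and> lin_ext sc x g \<in> N"
    by (rule rel2_lin_ext[OF m N r1 r2 r3 r4 x])
  show "fin_supp (fscale c x + y) \<and> lin_ext sc (fscale c x + y) g \<in> N"
    using xx y
    by (simp add: lin_ext_add[OF m] lin_ext_scale[OF m] module.subspace_add[OF m N]
        module.subspace_scale[OF m N])
qed

lemma span_fin_supp:
  fixes smul :: "'k::field \<Rightarrow> 'h::plus \<Rightarrow> 'h"
  assumes t: "t \<in> module.span fscale (rel2 smul)"
  shows "fin_supp t"
proof -
  have m: "module (fscale :: 'k \<Rightarrow> ('h \<times> 'h \<Rightarrow> 'k) \<Rightarrow> _)" by (rule module_fscale)
  show ?thesis
    using span_lin_ext[OF m module.subspace_UNIV[OF m], of "\<lambda>p. 0" smul t] t by simp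
qed

lemma teq2_refl: "teq2 smul t t"
  unfolding teq2_def by (simp add: module.span_zero[OF module_fscale])

lemma teq2_sym: "teq2 smul t u \<Longrightarrow> teq2 smul u t"
  unfolding teq2_def using module.span_neg[OF module_fscale] by fastforce

lemma teq2_trans: "teq2 smul t u \<Longrightarrow> teq2 smul u v \<Longrightarrow> teq2 smul t v"
  unfolding teq2_def
proof -
  assume "t - u \<in> module.span fscale (rel2 smul)" "u - v \<in> module.span fscale (rel2 smul)"
  from module.span_add[OF module_fscale this] show "t - v \<in> module.span fscale (rel2 smul)" by simp
qed

lemma teq2_add: "teq2 smul t u \<Longrightarrow> teq2 smul t' u' \<Longrightarrow> teq2 smul (t + t') (u + u')"
  unfolding teq2_def
proof -
  assume "t - u \<in> module.span fscale (rel2 smul)" "t' - u' \<in> module.span fscale (rel2 smul)"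
  from module.span_add[OF module_fscale this] show "t + t' - (u + u') \<in> module.span fscale (rel2 smul)"
    by (simp add: algebra_simps)
qed

lemma teq2_diff: "teq2 smul t u \<Longrightarrow> teq2 smul t' u' \<Longrightarrow> teq2 smul (t - t') (u - u')"
  unfolding teq2_def
proof -
  assume "t - u \<in> module.span fscale (rel2 smul)" "t' - u' \<in> module.span fscale (rel2 smul)"
  from module.span_diff[OF module_fscale this] show "t - t' - (u - u') \<in> module.span fscale (rel2 smul)"
    by (simp add: algebra_simps)
qed

lemma fscale_diff: "fscale c t - fscale c u = fscale c (t - (u :: _ \<Rightarrow> 'k::field))"
  by (simp add: fscale_def fun_eq_iff algebra_simps)

lemma teq2_scale: "teq2 smul t u \<Longrightarrow> teq2 smul (fscale c t) (fscale c u)"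
  unfolding teq2_def fscale_diff by (rule module.span_scale[OF module_fscale])

lemma teq2_rel: "t - u \<in> rel2 smul \<Longrightarrow> teq2 smul t u"
  unfolding teq2_def by (rule module.span_base[OF module_fscale])

lemma rel2_I1: "delta (x + x', y) - delta (x, y) - delta (x', y) \<in> rel2 smul"
  unfolding rel2_def by blast
lemma rel2_I2: "delta (x, y + y') - delta (x, y) - delta (x, y') \<in> rel2 smul"
  unfolding rel2_def by blast
lemma rel2_I3: "delta (smul c x, y) - fscale c (delta (x, y)) \<in> rel2 smul"
  unfolding rel2_def by blast
lemma rel2_I4: "delta (x, smul c y) - fscale c (delta (x, y)) \<in> rel2 smul"
  unfolding rel2_def by blast

lemma delta_add_l: "teq2 smul (delta (x + x', y)) (delta (x, y) + delta (x', y))"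
  by (rule teq2_rel) (unfold diff_diff_eq[symmetric], rule rel2_I1)

lemma delta_add_r: "teq2 smul (delta (x, y + y')) (delta (x, y) + delta (x, y'))"
  by (rule teq2_rel) (unfold diff_diff_eq[symmetric], rule rel2_I2)

lemma delta_scale_l: "teq2 smul (delta (smul c x, y)) (fscale c (delta (x, y)))"
  by (rule teq2_rel) (rule rel2_I3)

lemma delta_scale_r: "teq2 smul (delta (x, smul c y)) (fscale c (delta (x, y)))"
  by (rule teq2_rel) (rule rel2_I4)

lemma teq2_lin_ext_V2:
  fixes smul :: "'k::field \<Rightarrow> 'h::plus \<Rightarrow> 'h"
  assumes r1: "\<And>x x' y. teq2 smul (g (x + x', y)) (g (x, y) + g (x', y))"
  and r2: "\<And>x y y'. teq2 smul (g (x, y + y')) (g (x, y) + g (x, y'))"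
  and r3: "\<And>c x y. teq2 smul (g (smul c x, y)) (fscale c (g (x, y)))"
  and r4: "\<And>c x y. teq2 smul (g (x, smul c y)) (fscale c (g (x, y)))"
  and tu: "teq2 smul t u" and t: "fin_supp t" and u: "fin_supp u"
  shows "teq2 smul (lin_ext fscale t g) (lin_ext fscale u g)"
proof -
  have m: "module (fscale :: 'k \<Rightarrow> ('h \<times> 'h \<Rightarrow> 'k) \<Rightarrow> _)" by (rule module_fscale)
  have N: "module.subspace fscale (module.span fscale (rel2 smul))"
    by (rule module.subspace_span[OF m])
  have "fin_supp (t - u) \<and> lin_ext fscale (t - u) g \<in> module.span fscale (rel2 smul)"
    apply (rule span_lin_ext[OF m N, where smul = smul])
    using r1 r2 r3 r4 tu by (auto simp: teq2_def diff_diff_eq)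
  then show ?thesis unfolding teq2_def by (simp add: lin_ext_diff[OF m t u])
qed

lemma teq2_lin_ext_eq:
  fixes smul :: "'k::field \<Rightarrow> 'h::plus \<Rightarrow> 'h" and sc :: "'k \<Rightarrow> 'b::ab_group_add \<Rightarrow> 'b"
  assumes m: "module sc"
  and r1: "\<And>x x' y. g (x + x', y) = g (x, y) + g (x', y)"
  and r2: "\<And>x y y'. g (x, y + y') = g (x, y) + g (x, y')"
  and r3: "\<And>c x y. g (smul c x, y) = sc c (g (x, y))"
  and r4: "\<And>c x y. g (x, smul c y) = sc c (g (x, y))"
  and tu: "teq2 smul t u" and t: "fin_supp t" and u: "fin_supp u"
  shows "lin_ext sc t g = lin_ext sc u g"
proof -
  have "fin_supp (t - u) \<and> lin_ext sc (t - u) g \<in> {0}"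
    apply (rule span_lin_ext[OF m module.subspace_single_0[OF m], where smul = smul])
    using r1 r2 r3 r4 tu by (auto simp: teq2_def)
  then show ?thesis by (simp add: lin_ext_diff[OF m t u])
qed

lemma lin_map_add:
  assumes "vector_space smul" "lin_map smul f" shows "f (x + y) = f x + f y"
proof -
  have "f (smul 1 x + y) = smul 1 (f x) + f y" using assms(2) unfolding lin_map_def by blast
  then show ?thesis using module.scale_one[of smul] assms(1) by (simp add: module_iff_vector_space)
qed

lemma lin_map_0: "vector_space smul \<Longrightarrow> lin_map smul f \<Longrightarrow> f 0 = 0"
  using lin_map_add[of smul f 0 0] by simp

lemma lin_map_scale:
  assumes "vector_space smul" "lin_map smul f" shows "f (smul c x) = smul c (f x)"
proof -
  have "f (smul c x + 0) = smul c (f x) + f 0" using assms(2) unfolding lin_map_def by blast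
  then show ?thesis by (simp add: lin_map_0[OF assms])
qed

lemma lin_map_neg:
  assumes "vector_space smul" "lin_map smul f" shows "f (- x) = - f x"
proof -
  have "f (x + - x) = f x + f (- x)" by (rule lin_map_add[OF assms])
  then have "f (- x) + f x = 0" using lin_map_0[OF assms] by (simp add: add.commute)
  then show ?thesis by (simp add: eq_neg_iff_add_eq_0)
qed

lemma lin_map_diff: "vector_space smul \<Longrightarrow> lin_map smul f \<Longrightarrow> f (x - y) = f x - f y"
  using lin_map_add[of smul f x "- y"] lin_map_neg[of smul f y] by simp

lemma lin_map_id: "vector_space smul \<Longrightarrow> lin_map smul (\<lambda>x. x)"
  unfolding lin_map_def by simp

lemma lin_map_comp: "vector_space smul \<Longrightarrow> lin_map smul f \<Longrightarrow> lin_map smul g \<Longrightarrow> lin_map smul (\<lambda>x. f (g x))"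
  unfolding lin_map_def by simp

definition rmul :: "('h::times \<times> 'h) \<Rightarrow> ('h \<times> 'h \<Rightarrow> 'k::field) \<Rightarrow> ('h \<times> 'h \<Rightarrow> 'k)" where
  "rmul b t = lin_ext fscale t (\<lambda>p. delta (fst p * fst b, snd p * snd b))"

lemma tmul2_delta_right: "tmul2 t (delta b) = rmul b t"
  unfolding tmul2_def rmul_def by (simp add: lin_ext_delta[OF module_fscale])

lemma rmul_delta: "rmul b (delta p) = delta (fst p * fst b, snd p * snd b)"
  unfolding rmul_def by (simp add: lin_ext_delta[OF module_fscale])

lemma rmul_add: "fin_supp t \<Longrightarrow> fin_supp u \<Longrightarrow> rmul b (t + u) = rmul b t + rmul b u"
  unfolding rmul_def by (rule lin_ext_add[OF module_fscale])

lemma rmul_fin: "fin_supp (rmul b t)"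
  unfolding rmul_def by (rule fin_supp_lin_ext) simp

lemma rmul_comp: "fin_supp t \<Longrightarrow> rmul c (rmul (b :: 'h::semigroup_mult \<times> 'h) t) = rmul (fst b * fst c, snd b * snd c) (t :: _ \<Rightarrow> 'k::field)"
  unfolding rmul_def
  by (simp add: lin_ext_comp[OF module_fscale] lin_ext_delta[OF module_fscale] mult.assoc)

lemma lin_ext_delta_id: "fin_supp t \<Longrightarrow> lin_ext fscale t delta = (t :: _ \<Rightarrow> 'k::field)"
proof -
  assume t: "fin_supp t"
  let ?A = "{p. t p \<noteq> 0}"
  have fA: "finite ?A" using t by (simp add: fin_supp_def)
  have "lin_ext fscale t delta = (\<Sum>p\<in>?A. fscale (t p) (delta p))"
    by (rule lin_ext_sup[OF module_fscale fA]) simp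
  moreover have "(\<Sum>p\<in>?A. fscale (t p) (delta p)) q = t q" for q
  proof -
    have "(\<Sum>p\<in>?A. fscale (t p) (delta p)) q = (\<Sum>p\<in>?A. if q = p then t p else 0)"
      unfolding sum_fun_app by (rule sum.cong) (auto simp: fscale_def delta_def)
    also have "\<dots> = t q" using fA by (simp add: sum.delta')
    finally show ?thesis .
  qed
  ultimately show ?thesis by auto
qed

lemma rmul_one: "fin_supp t \<Longrightarrow> rmul (1 :: 'h::monoid_mult, 1 :: 'h) t = (t :: _ \<Rightarrow> 'k::field)"
proof -
  assume t: "fin_supp t"
  have "(\<lambda>p::'h \<times> 'h. delta (fst p * 1, snd p * 1) :: _ \<Rightarrow> 'k) = delta" by (simp add: fun_eq_iff)
  then show ?thesis unfolding rmul_def using lin_ext_delta_id[OF t] by simp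
qed

lemma tmul2_add_right:
  "tmul2 t (delta a + delta b) = rmul a t + rmul (b :: 'h::times \<times> 'h) (t :: _ \<Rightarrow> 'k::field)"
proof -
  have "lin_ext fscale (delta a + delta b :: _ \<Rightarrow> 'k) (\<lambda>q. delta (fst p * fst q, snd p * snd q) :: _ \<Rightarrow> 'k)
      = delta (fst p * fst a, snd p * snd a) + delta (fst p * fst b, snd p * snd b)" for p :: "'h \<times> 'h"
    by (subst lin_ext_add[OF module_fscale]) (simp_all add: lin_ext_delta[OF module_fscale])
  then show ?thesis
    unfolding tmul2_def rmul_def by (simp only: lin_ext_fun_add[OF module_fscale])
qed

locale rbsh =
  fixes smul :: "'k::field \<Rightarrow> 'h::ring_1 \<Rightarrow> 'h"
    and \<Delta> :: "'h \<Rightarrow> ('h \<times> 'h \<Rightarrow> 'k)"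
    and \<epsilon> :: "'h \<Rightarrow> 'k"
    and S B1 B2 :: "'h \<Rightarrow> 'h"
  assumes rbs: "rbs_hopf smul \<Delta> \<epsilon> S B1 B2"
begin

lemma hopf: "cocomm_hopf smul \<Delta> \<epsilon> S" using rbs unfolding rbs_hopf_def by auto
lemma falg: "f_algebra smul" using hopf unfolding cocomm_hopf_def by auto
lemma vs: "vector_space smul" using falg unfolding f_algebra_def by auto
lemma m: "module smul" using vs module_iff_vector_space by auto
lemma smul_mult_l: "smul c x * y = smul c (x * y)" using falg unfolding f_algebra_def by auto
lemma smul_mult_r: "x * smul c y = smul c (x * y)" using falg unfolding f_algebra_def by metis
lemma D_fin: "fin_supp (\<Delta> x)" using hopf unfolding cocomm_hopf_def by auto
lemma D_lin: "teq2 smul (\<Delta> (smul c x + y)) (fscale c (\<Delta> x) + \<Delta> y)" using hopf unfolding cocomm_hopf_def by auto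
lemma eps_lin: "\<epsilon> (smul c x + y) = c * \<epsilon> x + \<epsilon> y" using hopf unfolding cocomm_hopf_def by auto
lemma counit1: "lin_ext smul (\<Delta> a) (\<lambda>p. smul (\<epsilon> (fst p)) (snd p)) = a" using hopf unfolding cocomm_hopf_def by auto
lemma D_mult: "teq2 smul (\<Delta> (x * y)) (tmul2 (\<Delta> x) (\<Delta> y))" using hopf unfolding cocomm_hopf_def by auto
lemma D_one: "teq2 smul (\<Delta> 1) (delta (1, 1))" using hopf unfolding cocomm_hopf_def by auto
lemma eps_mult: "\<epsilon> (x * y) = \<epsilon> x * \<epsilon> y" using hopf unfolding cocomm_hopf_def by auto
lemma eps_one: "\<epsilon> 1 = 1" using hopf unfolding cocomm_hopf_def by auto
lemma S_lin: "lin_map smul S" using hopf unfolding cocomm_hopf_def by auto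
lemma antipode1: "lin_ext smul (\<Delta> a) (\<lambda>p. S (fst p) * snd p) = smul (\<epsilon> a) 1" using hopf unfolding cocomm_hopf_def by auto
lemma antipode2: "lin_ext smul (\<Delta> a) (\<lambda>p. fst p * S (snd p)) = smul (\<epsilon> a) 1" using hopf unfolding cocomm_hopf_def by auto
lemma B1_hom: "coalg_hom smul \<Delta> \<epsilon> B1" using rbs unfolding rbs_hopf_def by auto
lemma B2_hom: "coalg_hom smul \<Delta> \<epsilon> B2" using rbs unfolding rbs_hopf_def by auto
lemma B1_one: "B1 1 = 1" using rbs unfolding rbs_hopf_def by auto
lemma B2_one: "B2 1 = 1" using rbs unfolding rbs_hopf_def by auto
lemma RB1: "B1 a * B1 b = B1 (lin_ext smul (\<Delta> a) (\<lambda>p. B1 (fst p) * b * S (B2 (snd p))))"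
  using rbs unfolding rbs_hopf_def by auto
lemma RB2: "B2 a * B2 b = B2 (lin_ext smul (\<Delta> a) (\<lambda>p. B1 (fst p) * b * S (B2 (snd p))))"
  using rbs unfolding rbs_hopf_def by auto

lemma hom_lin: "coalg_hom smul \<Delta> \<epsilon> B \<Longrightarrow> lin_map smul B" by (simp add: coalg_hom_def)
lemma hom_D: "coalg_hom smul \<Delta> \<epsilon> B \<Longrightarrow> teq2 smul (\<Delta> (B a)) (lin_ext fscale (\<Delta> a) (\<lambda>p. delta (B (fst p), B (snd p))))"
  by (simp add: coalg_hom_def)
lemma hom_eps: "coalg_hom smul \<Delta> \<epsilon> B \<Longrightarrow> \<epsilon> (B a) = \<epsilon> a" by (simp add: coalg_hom_def)

lemma eps_0: "\<epsilon> 0 = 0"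
proof -
  have "\<epsilon> (smul 1 0 + 0) = 1 * \<epsilon> 0 + \<epsilon> 0" by (rule eps_lin)
  then have h: "\<epsilon> 0 + 0 = \<epsilon> 0 + \<epsilon> 0" by (simp only: module.scale_zero_right[OF m] add_0_right mult_1)
  show ?thesis using add_left_cancel[THEN iffD1, OF h] by simp
qed

lemma eps_add: "\<epsilon> (x + y) = \<epsilon> x + \<epsilon> y"
  using eps_lin[of 1 x y] module.scale_one[OF m] by simp

lemma eps_scale: "\<epsilon> (smul c x) = c * \<epsilon> x"
  using eps_lin[of c x 0] eps_0 by simp

lemma prod_bil:
  assumes F: "lin_map smul F" and G: "lin_map smul G"
  and tu: "teq2 smul t u" and t: "fin_supp t" and u: "fin_supp u"
  shows "lin_ext smul t (\<lambda>p. F (fst p) * b * G (snd p)) = lin_ext smul u (\<lambda>p. F (fst p) * b * G (snd p))"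
  by (rule teq2_lin_ext_eq[OF m _ _ _ _ tu t u])
     (simp_all add: lin_map_add[OF vs F] lin_map_add[OF vs G] lin_map_scale[OF vs F] lin_map_scale[OF vs G]
       smul_mult_l smul_mult_r distrib_left distrib_right)

lemma counit_bil:
  assumes tu: "teq2 smul t u" and t: "fin_supp t" and u: "fin_supp u"
  shows "lin_ext smul t (\<lambda>p. smul (\<epsilon> (fst p)) (snd p)) = lin_ext smul u (\<lambda>p. smul (\<epsilon> (fst p)) (snd p))"
  by (rule teq2_lin_ext_eq[OF m _ _ _ _ tu t u])
     (simp_all add: eps_add eps_scale module.scale_left_distrib[OF m] module.scale_right_distrib[OF m]
       module.scale_scale[OF m] mult.commute)

lemma Phi_teq:
  assumes B: "lin_map smul B" and tu: "teq2 smul t u" and t: "fin_supp t" and u: "fin_supp u"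
  shows "teq2 smul (lin_ext fscale t (\<lambda>p. delta (B (fst p), B (snd p))))
                   (lin_ext fscale u (\<lambda>p. delta (B (fst p), B (snd p))))"
  by (rule teq2_lin_ext_V2[OF _ _ _ _ tu t u])
     (simp_all add: lin_map_add[OF vs B] lin_map_scale[OF vs B] delta_add_l delta_add_r delta_scale_l delta_scale_r)

lemma rmul_teq:
  assumes tu: "teq2 smul t u" and t: "fin_supp t" and u: "fin_supp u"
  shows "teq2 smul (rmul b t) (rmul b u)"
  unfolding rmul_def
  by (rule teq2_lin_ext_V2[OF _ _ _ _ tu t u])
     (simp_all add: smul_mult_l distrib_right delta_add_l delta_add_r delta_scale_l delta_scale_r)

lemma tmul2_teq_right:
  assumes ss: "teq2 smul s s'" and s: "fin_supp s" and s': "fin_supp s'"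
  shows "teq2 smul (tmul2 t s) (tmul2 t s')"
proof -
  let ?L = "\<lambda>s p. lin_ext fscale s (\<lambda>q. delta (fst p * fst q, snd p * snd q)) :: 'h \<times> 'h \<Rightarrow> 'k"
  have "teq2 smul (?L s p) (?L s' p)" for p
    by (rule teq2_lin_ext_V2[OF _ _ _ _ ss s s'])
       (simp_all add: smul_mult_r distrib_left delta_add_l delta_add_r delta_scale_l delta_scale_r)
  then have "\<And>p. ?L s p - ?L s' p \<in> module.span fscale (rel2 smul)" by (simp add: teq2_def)
  then have "lin_ext fscale t (\<lambda>p. ?L s p - ?L s' p) \<in> module.span fscale (rel2 smul)"
    by (rule lin_ext_in_subspace[OF module_fscale module.subspace_span[OF module_fscale]])
  then show ?thesis unfolding teq2_def tmul2_def by (simp add: lin_ext_fun_diff[OF module_fscale])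
qed

end

context rbsh
begin

lemma G_D: "g \<in> grouplike smul \<Delta> \<Longrightarrow> teq2 smul (\<Delta> g) (delta (g, g))"
  by (simp add: grouplike_def)
lemma G_nz: "g \<in> grouplike smul \<Delta> \<Longrightarrow> g \<noteq> 0"
  by (simp add: grouplike_def)

lemma G_eps: assumes g: "g \<in> grouplike smul \<Delta>" shows "\<epsilon> g = 1"
proof -
  have "lin_ext smul (\<Delta> g) (\<lambda>p. smul (\<epsilon> (fst p)) (snd p)) = lin_ext smul (delta (g, g)) (\<lambda>p. smul (\<epsilon> (fst p)) (snd p))"
    by (rule counit_bil[OF G_D[OF g] D_fin fin_supp_delta])
  then have "smul (\<epsilon> g) g = g" using counit1[of g] by (simp add: lin_ext_delta[OF m])
  then have "smul (\<epsilon> g) g = smul 1 g" by (simp add: module.scale_one[OF m])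
  then show ?thesis using G_nz[OF g] vector_space.scale_cancel_right[OF vs] by simp
qed

lemma B_G:
  assumes B: "coalg_hom smul \<Delta> \<epsilon> B" and g: "g \<in> grouplike smul \<Delta>"
  shows "B g \<in> grouplike smul \<Delta>"
proof -
  have "teq2 smul (\<Delta> (B g)) (lin_ext fscale (\<Delta> g) (\<lambda>p. delta (B (fst p), B (snd p))))"
    by (rule hom_D[OF B])
  moreover have "teq2 smul (lin_ext fscale (\<Delta> g) (\<lambda>p. delta (B (fst p), B (snd p))))
      (lin_ext fscale (delta (g, g)) (\<lambda>p. delta (B (fst p), B (snd p))))"
    by (rule Phi_teq[OF hom_lin[OF B] G_D[OF g] D_fin fin_supp_delta])
  ultimately have "teq2 smul (\<Delta> (B g)) (delta (B g, B g))"
    by (simp add: lin_ext_delta[OF module_fscale] teq2_trans)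
  moreover have "B g \<noteq> 0"
    using hom_eps[OF B, of g] G_eps[OF g] eps_0 by auto
  ultimately show ?thesis by (simp add: grouplike_def)
qed

lemma G_mult:
  assumes g: "g \<in> grouplike smul \<Delta>" and h: "h \<in> grouplike smul \<Delta>"
  shows "g * h \<in> grouplike smul \<Delta>"
proof -
  have t1: "teq2 smul (\<Delta> (g * h)) (tmul2 (\<Delta> g) (\<Delta> h))" by (rule D_mult)
  have t2: "teq2 smul (tmul2 (\<Delta> g) (\<Delta> h)) (rmul (h, h) (\<Delta> g))"
    using tmul2_teq_right[OF G_D[OF h] D_fin fin_supp_delta, of "\<Delta> g"]
    by (simp add: tmul2_delta_right)
  have t3: "teq2 smul (rmul (h, h) (\<Delta> g)) (delta (g * h, g * h))"
    using rmul_teq[OF G_D[OF g] D_fin fin_supp_delta, of "(h, h)"] by (simp add: rmul_delta)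
  have "teq2 smul (\<Delta> (g * h)) (delta (g * h, g * h))"
    by (rule teq2_trans[OF t1 teq2_trans[OF t2 t3]])
  moreover have "g * h \<noteq> 0"
    using eps_mult[of g h] G_eps[OF g] G_eps[OF h] eps_0 by auto
  ultimately show ?thesis by (simp add: grouplike_def)
qed

lemma G_one: "1 \<in> grouplike smul \<Delta>"
  using D_one by (simp add: grouplike_def)

lemma G_S:
  assumes g: "g \<in> grouplike smul \<Delta>"
  shows "S g * g = 1" "g * S g = 1"
proof -
  have "lin_ext smul (\<Delta> g) (\<lambda>p. S (fst p) * 1 * snd p) = lin_ext smul (delta (g, g)) (\<lambda>p. S (fst p) * 1 * snd p)"
    by (rule prod_bil[OF S_lin lin_map_id[OF vs] G_D[OF g] D_fin fin_supp_delta])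
  then show "S g * g = 1" using antipode1[of g] G_eps[OF g]
    by (simp add: lin_ext_delta[OF m] module.scale_one[OF m])
  have "lin_ext smul (\<Delta> g) (\<lambda>p. fst p * 1 * S (snd p)) = lin_ext smul (delta (g, g)) (\<lambda>p. fst p * 1 * S (snd p))"
    by (rule prod_bil[OF lin_map_id[OF vs] S_lin G_D[OF g] D_fin fin_supp_delta])
  then show "g * S g = 1" using antipode2[of g] G_eps[OF g]
    by (simp add: lin_ext_delta[OF m] module.scale_one[OF m])
qed

lemma G_S_mem:
  assumes g: "g \<in> grouplike smul \<Delta>"
  shows "S g \<in> grouplike smul \<Delta>"
proof -
  let ?u = "S g"
  have ug: "?u * g = 1" and gu: "g * ?u = 1" using G_S[OF g] by auto
  have t1: "teq2 smul (\<Delta> (?u * g)) (tmul2 (\<Delta> ?u) (\<Delta> g))" by (rule D_mult)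
  have t2: "teq2 smul (tmul2 (\<Delta> ?u) (\<Delta> g)) (rmul (g, g) (\<Delta> ?u))"
    using tmul2_teq_right[OF G_D[OF g] D_fin fin_supp_delta, of "\<Delta> ?u"]
    by (simp add: tmul2_delta_right)
  have t0: "teq2 smul (\<Delta> (?u * g)) (delta (1, 1))" using D_one ug by simp
  have t4: "teq2 smul (rmul (g, g) (\<Delta> ?u)) (delta (1, 1))"
    by (rule teq2_trans[OF teq2_sym[OF teq2_trans[OF t1 t2]] t0])
  have t5: "teq2 smul (rmul (?u, ?u) (rmul (g, g) (\<Delta> ?u))) (rmul (?u, ?u) (delta (1, 1)))"
    by (rule rmul_teq[OF t4 rmul_fin fin_supp_delta])
  have e1: "rmul (?u, ?u) (rmul (g, g) (\<Delta> ?u)) = \<Delta> ?u"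
    by (simp add: rmul_comp[OF D_fin] gu rmul_one[OF D_fin])
  have e2: "rmul (?u, ?u) (delta (1, 1)) = delta (?u, ?u)"
    by (simp add: rmul_delta)
  have "teq2 smul (\<Delta> ?u) (delta (?u, ?u))" using t5 unfolding e1 e2 .
  moreover have "?u \<noteq> 0" using ug by auto
  ultimately show ?thesis by (simp add: grouplike_def)
qed

lemma S_anti:
  assumes x: "x \<in> grouplike smul \<Delta>" and y: "y \<in> grouplike smul \<Delta>"
  shows "S (x * y) = S y * S x"
proof -
  have xy: "x * y \<in> grouplike smul \<Delta>" by (rule G_mult[OF x y])
  have "S y * S x * (x * y) = 1"
    by (simp add: mult.assoc[symmetric]) (simp add: mult.assoc G_S[OF x] G_S[OF y])
  then have "S (x * y) = (S y * S x * (x * y)) * S (x * y)" by simp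
  also have "\<dots> = S y * S x * (x * y * S (x * y))" by (simp only: mult.assoc)
  also have "\<dots> = S y * S x" using G_S(2)[OF xy] by simp
  finally show ?thesis .
qed

lemma group_G: "group (grouplike_group smul \<Delta>)"
proof (rule groupI)
  fix x y assume "x \<in> carrier (grouplike_group smul \<Delta>)" "y \<in> carrier (grouplike_group smul \<Delta>)"
  then show "x \<otimes>\<^bsub>grouplike_group smul \<Delta>\<^esub> y \<in> carrier (grouplike_group smul \<Delta>)"
    by (simp add: grouplike_group_def G_mult)
next
  show "\<one>\<^bsub>grouplike_group smul \<Delta>\<^esub> \<in> carrier (grouplike_group smul \<Delta>)"
    by (simp add: grouplike_group_def G_one)
next
  fix x y z show "x \<otimes>\<^bsub>grouplike_group smul \<Delta>\<^esub> y \<otimes>\<^bsub>grouplike_group smul \<Delta>\<^esub> z =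
     x \<otimes>\<^bsub>grouplike_group smul \<Delta>\<^esub> (y \<otimes>\<^bsub>grouplike_group smul \<Delta>\<^esub> z)"
    by (simp add: grouplike_group_def mult.assoc)
next
  fix x show "\<one>\<^bsub>grouplike_group smul \<Delta>\<^esub> \<otimes>\<^bsub>grouplike_group smul \<Delta>\<^esub> x = x"
    by (simp add: grouplike_group_def)
next
  fix x assume "x \<in> carrier (grouplike_group smul \<Delta>)"
  then show "\<exists>y\<in>carrier (grouplike_group smul \<Delta>). y \<otimes>\<^bsub>grouplike_group smul \<Delta>\<^esub> x = \<one>\<^bsub>grouplike_group smul \<Delta>\<^esub>"
    by (auto simp: grouplike_group_def intro!: bexI[of _ "S x"] G_S G_S_mem)
qed

lemma RB_G:
  assumes a: "a \<in> grouplike smul \<Delta>"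
  shows "B1 a * B1 b = B1 (B1 a * b * S (B2 a))" "B2 a * B2 b = B2 (B1 a * b * S (B2 a))"
proof -
  have "lin_ext smul (\<Delta> a) (\<lambda>p. B1 (fst p) * b * S (B2 (snd p)))
      = lin_ext smul (delta (a, a)) (\<lambda>p. B1 (fst p) * b * S (B2 (snd p)))"
    by (rule prod_bil[OF hom_lin[OF B1_hom] lin_map_comp[OF vs S_lin hom_lin[OF B2_hom]] G_D[OF a] D_fin fin_supp_delta])
  then have e: "lin_ext smul (\<Delta> a) (\<lambda>p. B1 (fst p) * b * S (B2 (snd p))) = B1 a * b * S (B2 a)"
    by (simp add: lin_ext_delta[OF m])
  show "B1 a * B1 b = B1 (B1 a * b * S (B2 a))" using RB1[of a b] e by simp
  show "B2 a * B2 b = B2 (B1 a * b * S (B2 a))" using RB2[of a b] e by simp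
qed

lemma rbs_group_G: "rbs_group (grouplike_group smul \<Delta>) B1 (S \<circ> B2)"
  unfolding rbs_group_def
proof (intro conjI ballI)
  show "group (grouplike_group smul \<Delta>)" by (rule group_G)
next
  fix a assume "a \<in> carrier (grouplike_group smul \<Delta>)"
  then have a: "a \<in> grouplike smul \<Delta>" by (simp add: grouplike_group_def)
  show "B1 a \<in> carrier (grouplike_group smul \<Delta>)" using B_G[OF B1_hom a] by (simp add: grouplike_group_def)
  show "(S \<circ> B2) a \<in> carrier (grouplike_group smul \<Delta>)"
    using G_S_mem[OF B_G[OF B2_hom a]] by (simp add: grouplike_group_def)
next
  fix a b assume "a \<in> carrier (grouplike_group smul \<Delta>)" "b \<in> carrier (grouplike_group smul \<Delta>)"
  then have a: "a \<in> grouplike smul \<Delta>" and b: "b \<in> grouplike smul \<Delta>" by (simp_all add: grouplike_group_def)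
  show "B1 a \<otimes>\<^bsub>grouplike_group smul \<Delta>\<^esub> B1 b =
    B1 (B1 a \<otimes>\<^bsub>grouplike_group smul \<Delta>\<^esub> b \<otimes>\<^bsub>grouplike_group smul \<Delta>\<^esub> (S \<circ> B2) a)"
    using RB_G(1)[OF a, of b] by (simp add: grouplike_group_def)
  have "S (B2 b) * S (B2 a) = S (B2 a * B2 b)"
    by (rule S_anti[OF B_G[OF B2_hom a] B_G[OF B2_hom b], symmetric])
  also have "\<dots> = S (B2 (B1 a * b * S (B2 a)))" using RB_G(2)[OF a, of b] by simp
  finally show "(S \<circ> B2) b \<otimes>\<^bsub>grouplike_group smul \<Delta>\<^esub> (S \<circ> B2) a =
    (S \<circ> B2) (B1 a \<otimes>\<^bsub>grouplike_group smul \<Delta>\<^esub> b \<otimes>\<^bsub>grouplike_group smul \<Delta>\<^esub> (S \<circ> B2) a)"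
    by (simp add: grouplike_group_def)
qed

end

context rbsh
begin

lemma P_D: "x \<in> primitive smul \<Delta> \<Longrightarrow> teq2 smul (\<Delta> x) (delta (x, 1) + delta (1, x))"
  by (simp add: primitive_def)

lemma fin_dd: "fin_supp (delta (x, 1) + delta (1, x) :: 'h \<times> 'h \<Rightarrow> 'k)" by simp

lemma delta_lin:
  "teq2 smul (delta (smul c x + y, 1) + delta (1, smul c x + y))
     (fscale c (delta (x, 1) + delta (1, x)) + (delta (y, 1) + delta (1, y)))"
proof -
  have l: "teq2 smul (delta (smul c x + y, 1)) (fscale c (delta (x, 1)) + delta (y, 1))"
    by (rule teq2_trans[OF delta_add_l teq2_add[OF delta_scale_l teq2_refl]])
  have r: "teq2 smul (delta (1, smul c x + y)) (fscale c (delta (1, x)) + delta (1, y))"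
    by (rule teq2_trans[OF delta_add_r teq2_add[OF delta_scale_r teq2_refl]])
  have e: "fscale c (delta (x, 1)) + delta (y, 1) + (fscale c (delta (1, x)) + delta (1, y))
      = fscale c (delta (x, 1) + delta (1, x)) + (delta (y, 1) + delta (1, y) :: 'h \<times> 'h \<Rightarrow> 'k)"
    by (simp add: fscale_def fun_eq_iff algebra_simps)
  show ?thesis using teq2_add[OF l r] unfolding e .
qed

lemma P_closed:
  assumes x: "x \<in> primitive smul \<Delta>" and y: "y \<in> primitive smul \<Delta>"
  shows "smul c x + y \<in> primitive smul \<Delta>"
proof -
  have "teq2 smul (\<Delta> (smul c x + y)) (fscale c (\<Delta> x) + \<Delta> y)" by (rule D_lin)
  moreover have "teq2 smul (fscale c (\<Delta> x) + \<Delta> y) (fscale c (delta (x, 1) + delta (1, x)) + (delta (y, 1) + delta (1, y)))"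
    by (rule teq2_add[OF teq2_scale[OF P_D[OF x]] P_D[OF y]])
  ultimately show ?thesis unfolding primitive_def
    using teq2_sym[OF delta_lin] teq2_trans by blast
qed

lemma P_zero: "0 \<in> primitive smul \<Delta>"
proof -
  have "teq2 smul (\<Delta> (smul (-1) 0 + 0)) (fscale (-1) (\<Delta> 0) + \<Delta> 0)" by (rule D_lin)
  moreover have "fscale (-1) (\<Delta> 0) + \<Delta> 0 = 0" by (simp add: fscale_def fun_eq_iff)
  ultimately have a: "teq2 smul (\<Delta> 0) 0" by (simp add: module.scale_zero_right[OF m])
  have b1: "teq2 smul (delta (0, 1)) (0 :: 'h \<times> 'h \<Rightarrow> 'k)"
    using delta_scale_l[of smul 0 0 1] by (simp add: module.scale_zero_left[OF m] fscale_def zero_fun_def)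
  have b2: "teq2 smul (delta (1, 0)) (0 :: 'h \<times> 'h \<Rightarrow> 'k)"
    using delta_scale_r[of smul 1 0 0] by (simp add: module.scale_zero_left[OF m] fscale_def zero_fun_def)
  have "teq2 smul (delta (0, 1) + delta (1, 0)) (0 :: 'h \<times> 'h \<Rightarrow> 'k)"
    using teq2_add[OF b1 b2] by simp
  then show ?thesis unfolding primitive_def using a teq2_sym teq2_trans by blast
qed

lemma P_subspace: "module.subspace smul (primitive smul \<Delta>)"
proof (rule module.subspaceI[OF m])
  show "0 \<in> primitive smul \<Delta>" by (rule P_zero)
next
  fix x y assume "x \<in> primitive smul \<Delta>" "y \<in> primitive smul \<Delta>"
  from P_closed[OF this, of 1] show "x + y \<in> primitive smul \<Delta>" by (simp add: module.scale_one[OF m])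
next
  fix c x assume "x \<in> primitive smul \<Delta>"
  from P_closed[OF this P_zero, of c] show "smul c x \<in> primitive smul \<Delta>" by simp
qed

lemma P_B:
  assumes B: "coalg_hom smul \<Delta> \<epsilon> B" and B1: "B 1 = 1" and x: "x \<in> primitive smul \<Delta>"
  shows "B x \<in> primitive smul \<Delta>"
proof -
  have "teq2 smul (\<Delta> (B x)) (lin_ext fscale (\<Delta> x) (\<lambda>p. delta (B (fst p), B (snd p))))"
    by (rule hom_D[OF B])
  moreover have "teq2 smul (lin_ext fscale (\<Delta> x) (\<lambda>p. delta (B (fst p), B (snd p))))
      (lin_ext fscale (delta (x, 1) + delta (1, x)) (\<lambda>p. delta (B (fst p), B (snd p))))"
    by (rule Phi_teq[OF hom_lin[OF B] P_D[OF x] D_fin fin_dd])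
  moreover have "lin_ext fscale (delta (x, 1) + delta (1, x) :: 'h \<times> 'h \<Rightarrow> 'k) (\<lambda>p. delta (B (fst p), B (snd p)))
      = (delta (B x, 1) + delta (1, B x) :: 'h \<times> 'h \<Rightarrow> 'k)"
    by (simp add: lin_ext_add[OF module_fscale] lin_ext_delta[OF module_fscale] B1)
  ultimately show ?thesis unfolding primitive_def using teq2_trans by fastforce
qed

lemma Q:
  assumes x: "x \<in> primitive smul \<Delta>" and y: "y \<in> primitive smul \<Delta>"
  shows "teq2 smul (\<Delta> (x * y)) (delta (x * y, 1) + delta (y, x) + delta (x, y) + delta (1, x * y))"
proof -
  have t1: "teq2 smul (\<Delta> (x * y)) (tmul2 (\<Delta> x) (\<Delta> y))" by (rule D_mult)
  have t2: "teq2 smul (tmul2 (\<Delta> x) (\<Delta> y)) (rmul (y, 1) (\<Delta> x) + rmul (1, y) (\<Delta> x))"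
    using tmul2_teq_right[OF P_D[OF y] D_fin fin_dd, of "\<Delta> x"] by (simp add: tmul2_add_right)
  have t3: "teq2 smul (rmul (y, 1) (\<Delta> x) + rmul (1, y) (\<Delta> x))
     (rmul (y, 1) (delta (x, 1) + delta (1, x)) + rmul (1, y) (delta (x, 1) + delta (1, x)))"
    by (rule teq2_add[OF rmul_teq[OF P_D[OF x] D_fin fin_dd] rmul_teq[OF P_D[OF x] D_fin fin_dd]])
  have e: "rmul (y, 1) (delta (x, 1) + delta (1, x)) + rmul (1, y) (delta (x, 1) + delta (1, x))
     = delta (x * y, 1) + delta (y, x) + delta (x, y) + (delta (1, x * y) :: 'h \<times> 'h \<Rightarrow> 'k)"
    by (simp add: rmul_add rmul_delta add_ac)
  show ?thesis using teq2_trans[OF t1 teq2_trans[OF t2 t3]] unfolding e .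
qed

lemma P_bracket:
  assumes x: "x \<in> primitive smul \<Delta>" and y: "y \<in> primitive smul \<Delta>"
  shows "x * y - y * x \<in> primitive smul \<Delta>"
proof -
  have e: "smul (-1) (y * x) + x * y = x * y - y * x"
    by (simp add: module.scale_minus_left[OF m] module.scale_one[OF m])
  have a: "teq2 smul (\<Delta> (smul (-1) (y * x) + x * y)) (fscale (-1) (\<Delta> (y * x)) + \<Delta> (x * y))"
    by (rule D_lin)
  have b: "teq2 smul (fscale (-1) (\<Delta> (y * x)) + \<Delta> (x * y))
     (fscale (-1) (delta (y * x, 1) + delta (x, y) + delta (y, x) + delta (1, y * x))
       + (delta (x * y, 1) + delta (y, x) + delta (x, y) + delta (1, x * y)))"
    by (rule teq2_add[OF teq2_scale[OF Q[OF y x]] Q[OF x y]])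
  have c: "fscale (-1) (delta (y * x, 1) + delta (x, y) + delta (y, x) + delta (1, y * x))
       + (delta (x * y, 1) + delta (y, x) + delta (x, y) + delta (1, x * y))
     = fscale (-1) (delta (y * x, 1) + delta (1, y * x)) + (delta (x * y, 1) + delta (1, x * y) :: 'h \<times> 'h \<Rightarrow> 'k)"
    by (simp add: fscale_def fun_eq_iff algebra_simps)
  have d: "teq2 smul (fscale (-1) (delta (y * x, 1) + delta (1, y * x)) + (delta (x * y, 1) + delta (1, x * y)))
     (delta (smul (-1) (y * x) + x * y, 1) + delta (1, smul (-1) (y * x) + x * y))"
    by (rule teq2_sym[OF delta_lin])
  have "teq2 smul (\<Delta> (smul (-1) (y * x) + x * y)) (delta (smul (-1) (y * x) + x * y, 1) + delta (1, smul (-1) (y * x) + x * y))"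
    using teq2_trans[OF a teq2_trans[OF b[unfolded c] d]] .
  then show ?thesis unfolding primitive_def e by simp
qed

lemma S_one: "S 1 = 1"
proof -
  have "lin_ext smul (\<Delta> 1) (\<lambda>p. S (fst p) * 1 * snd p) = lin_ext smul (delta (1, 1)) (\<lambda>p. S (fst p) * 1 * snd p)"
    by (rule prod_bil[OF S_lin lin_map_id[OF vs] D_one D_fin fin_supp_delta])
  then show ?thesis using antipode1[of 1] eps_one
    by (simp add: lin_ext_delta[OF m] module.scale_one[OF m])
qed

lemma eps_P: assumes x: "x \<in> primitive smul \<Delta>" shows "\<epsilon> x = 0"
proof -
  have "lin_ext smul (\<Delta> x) (\<lambda>p. smul (\<epsilon> (fst p)) (snd p))
      = lin_ext smul (delta (x, 1) + delta (1, x)) (\<lambda>p. smul (\<epsilon> (fst p)) (snd p))"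
    by (rule counit_bil[OF P_D[OF x] D_fin fin_dd])
  then have "smul (\<epsilon> x) 1 + x = x" using counit1[of x]
    by (simp add: lin_ext_add[OF m] lin_ext_delta[OF m] eps_one module.scale_one[OF m])
  then have "smul (\<epsilon> x) 1 = 0" by simp
  then show ?thesis using vector_space.scale_eq_0_iff[OF vs] by simp
qed

lemma S_P: assumes x: "x \<in> primitive smul \<Delta>" shows "S x = - x"
proof -
  have "lin_ext smul (\<Delta> x) (\<lambda>p. S (fst p) * 1 * snd p)
      = lin_ext smul (delta (x, 1) + delta (1, x)) (\<lambda>p. S (fst p) * 1 * snd p)"
    by (rule prod_bil[OF S_lin lin_map_id[OF vs] P_D[OF x] D_fin fin_dd])
  then have "S x + x = 0" using antipode1[of x] eps_P[OF x]
    by (simp add: lin_ext_add[OF m] lin_ext_delta[OF m] S_one module.scale_zero_left[OF m])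
  then show ?thesis by (simp add: eq_neg_iff_add_eq_0)
qed

lemma RB_P:
  assumes x: "x \<in> primitive smul \<Delta>"
  shows "B1 x * B1 b = B1 (B1 x * b - b * B2 x)" "B2 x * B2 b = B2 (B1 x * b - b * B2 x)"
proof -
  have "lin_ext smul (\<Delta> x) (\<lambda>p. B1 (fst p) * b * S (B2 (snd p)))
      = lin_ext smul (delta (x, 1) + delta (1, x)) (\<lambda>p. B1 (fst p) * b * S (B2 (snd p)))"
    by (rule prod_bil[OF hom_lin[OF B1_hom] lin_map_comp[OF vs S_lin hom_lin[OF B2_hom]] P_D[OF x] D_fin fin_dd])
  then have e: "lin_ext smul (\<Delta> x) (\<lambda>p. B1 (fst p) * b * S (B2 (snd p))) = B1 x * b - b * B2 x"
    using S_P[OF P_B[OF B2_hom B2_one x]]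
    by (simp add: lin_ext_add[OF m] lin_ext_delta[OF m] B1_one B2_one S_one)
  show "B1 x * B1 b = B1 (B1 x * b - b * B2 x)" using RB1[of x b] e by simp
  show "B2 x * B2 b = B2 (B1 x * b - b * B2 x)" using RB2[of x b] e by simp
qed

end

context rbsh
begin

lemma Lie_id:
  assumes a: "a \<in> primitive smul \<Delta>" and b: "b \<in> primitive smul \<Delta>"
  shows "B1 a * B1 b - B1 b * B1 a = B1 ((B1 a * B1 b - B1 b * B1 a) - (B2 a * B2 b - B2 b * B2 a))"
    and "B2 a * B2 b - B2 b * B2 a = B2 ((B1 a * B1 b - B1 b * B1 a) - (B2 a * B2 b - B2 b * B2 a))"
proof -
  have d1: "B1 (B1 y - B2 y) = B1 y" if y: "y \<in> primitive smul \<Delta>" for y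
    using RB_P(1)[OF y, of 1] by (simp add: B1_one)
  have d2: "B2 (B1 y - B2 y) = B2 y" if y: "y \<in> primitive smul \<Delta>" for y
    using RB_P(2)[OF y, of 1] by (simp add: B2_one)
  let ?Da = "B1 a - B2 a" and ?Db = "B1 b - B2 b"
  have X: "(B1 a * B1 b - B1 b * B1 a) - (B2 a * B2 b - B2 b * B2 a)
     = (B1 a * ?Db - ?Db * B2 a) - (B1 b * ?Da - ?Da * B2 b)"
    by (simp add: algebra_simps)
  have h1: "B1 (B1 a * ?Db - ?Db * B2 a) = B1 a * B1 b" using RB_P(1)[OF a, of ?Db] d1[OF b] by simp
  have h2: "B1 (B1 b * ?Da - ?Da * B2 b) = B1 b * B1 a" using RB_P(1)[OF b, of ?Da] d1[OF a] by simp
  have h3: "B2 (B1 a * ?Db - ?Db * B2 a) = B2 a * B2 b" using RB_P(2)[OF a, of ?Db] d2[OF b] by simp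
  have h4: "B2 (B1 b * ?Da - ?Da * B2 b) = B2 b * B2 a" using RB_P(2)[OF b, of ?Da] d2[OF a] by simp
  show "B1 a * B1 b - B1 b * B1 a = B1 ((B1 a * B1 b - B1 b * B1 a) - (B2 a * B2 b - B2 b * B2 a))"
  proof -
    have "B1 ((B1 a * ?Db - ?Db * B2 a) - (B1 b * ?Da - ?Da * B2 b))
        = B1 (B1 a * ?Db - ?Db * B2 a) - B1 (B1 b * ?Da - ?Da * B2 b)"
      by (rule lin_map_diff[OF vs hom_lin[OF B1_hom]])
    then show ?thesis unfolding X h1 h2 by simp
  qed
  show "B2 a * B2 b - B2 b * B2 a = B2 ((B1 a * B1 b - B1 b * B1 a) - (B2 a * B2 b - B2 b * B2 a))"
  proof -
    have "B2 ((B1 a * ?Db - ?Db * B2 a) - (B1 b * ?Da - ?Da * B2 b))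
        = B2 (B1 a * ?Db - ?Db * B2 a) - B2 (B1 b * ?Da - ?Da * B2 b)"
      by (rule lin_map_diff[OF vs hom_lin[OF B2_hom]])
    then show ?thesis unfolding X h3 h4 by simp
  qed
qed

lemma P_neg: "x \<in> primitive smul \<Delta> \<Longrightarrow> - x \<in> primitive smul \<Delta>"
  using P_closed[OF _ P_zero, of x "-1"] by (simp add: module.scale_minus_left[OF m] module.scale_one[OF m])

lemma lie_P: "lie_algebra smul (primitive smul \<Delta>) (\<lambda>a b. a * b - b * a)"
  unfolding lie_algebra_def
proof (intro conjI ballI allI)
  show "vector_space smul" by (rule vs)
  show "module.subspace smul (primitive smul \<Delta>)" by (rule P_subspace)
next
  fix x y assume "x \<in> primitive smul \<Delta>" "y \<in> primitive smul \<Delta>"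
  then show "x * y - y * x \<in> primitive smul \<Delta>" by (rule P_bracket)
next
  fix c x y z
  show "(smul c x + y) * z - z * (smul c x + y) = smul c (x * z - z * x) + (y * z - z * y)"
    by (simp add: algebra_simps smul_mult_l smul_mult_r module.scale_right_diff_distrib[OF m])
  show "z * (smul c x + y) - (smul c x + y) * z = smul c (z * x - x * z) + (z * y - y * z)"
    by (simp add: algebra_simps smul_mult_l smul_mult_r module.scale_right_diff_distrib[OF m])
next
  fix x :: 'h show "x * x - x * x = 0" by simp
next
  fix x y z :: 'h
  show "x * (y * z - z * y) - (y * z - z * y) * x + (y * (z * x - x * z) - (z * x - x * z) * y) +
        (z * (x * y - y * x) - (x * y - y * x) * z) = 0"
    by (simp add: algebra_simps)
qed

lemma rbs_lie_P: "rbs_lie smul (primitive smul \<Delta>) (\<lambda>a b. a * b - b * a) B1 (\<lambda>x. - B2 x)"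
  unfolding rbs_lie_def
proof (intro conjI ballI allI)
  show "lie_algebra smul (primitive smul \<Delta>) (\<lambda>a b. a * b - b * a)" by (rule lie_P)
next
  fix a assume a: "a \<in> primitive smul \<Delta>"
  show "B1 a \<in> primitive smul \<Delta>" by (rule P_B[OF B1_hom B1_one a])
  show "- B2 a \<in> primitive smul \<Delta>" by (rule P_neg[OF P_B[OF B2_hom B2_one a]])
next
  fix c x y
  show "B1 (smul c x + y) = smul c (B1 x) + B1 y"
    using hom_lin[OF B1_hom] unfolding lin_map_def by blast
  show "- B2 (smul c x + y) = smul c (- B2 x) + - B2 y"
    using hom_lin[OF B2_hom] unfolding lin_map_def by (simp add: module.scale_minus_right[OF m])
next
  fix a b assume a: "a \<in> primitive smul \<Delta>" and b: "b \<in> primitive smul \<Delta>"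
  show "B1 a * B1 b - B1 b * B1 a = B1 (B1 a * B1 b - B1 b * B1 a - (- B2 a * - B2 b - - B2 b * - B2 a))"
    using Lie_id(1)[OF a b] by simp
  show "- B2 b * - B2 a - - B2 a * - B2 b = - B2 (B1 a * B1 b - B1 b * B1 a - (- B2 a * - B2 b - - B2 b * - B2 a))"
    using Lie_id(2)[OF a b] by simp
qed

end

theorem mainTheorem8:
  fixes smul :: "'k::field_char_0 \<Rightarrow> 'h::ring_1 \<Rightarrow> 'h"
    and \<Delta> :: "'h \<Rightarrow> ('h \<times> 'h \<Rightarrow> 'k)"
    and \<epsilon> :: "'h \<Rightarrow> 'k"
    and S B1 B2 :: "'h \<Rightarrow> 'h"
  assumes "rbs_hopf smul \<Delta> \<epsilon> S B1 B2"
  shows "(\<forall>g\<in>grouplike smul \<Delta>. B1 g \<in> grouplike smul \<Delta> \<and> B2 g \<in> grouplike smul \<Delta>)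
       \<and> (\<forall>x\<in>primitive smul \<Delta>. B1 x \<in> primitive smul \<Delta> \<and> B2 x \<in> primitive smul \<Delta>)
       \<and> rbs_group (grouplike_group smul \<Delta>) B1 (S \<circ> B2)
       \<and> rbs_lie smul (primitive smul \<Delta>) (\<lambda>a b. a * b - b * a) B1 (\<lambda>x. - B2 x)"
proof -
  interpret R: rbsh smul \<Delta> \<epsilon> S B1 B2 by unfold_locales (rule assms)
  show ?thesis
    using R.B_G[OF R.B1_hom] R.B_G[OF R.B2_hom] R.P_B[OF R.B1_hom R.B1_one] R.P_B[OF R.B2_hom R.B2_one]
      R.rbs_group_G R.rbs_lie_P by blast
qed

end
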